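(* Let $(\Omega,\mathcal{F})$ be a measurable space and $T:\Omega\to\Omega$ a measurable map. Let $\mathbb{V}(A)=\sup_{P\in\Theta}P(A)$, $A\in\mathcal{F}$, be an upper probability, where $\Theta=\{P \text{ probability on }(\Omega,\mathcal{F}) : P(A)\le \mathbb{V}(A)\ \forall A\in\mathcal{F}\}$. Assume $\mathbb{V}$ is continuous (from above), $T$-invariant, and $T$-ergodic. Let $\Theta_0$ be the set of $T$-invariant probabilities in $\Theta$, and let $\mathbb{E}^0[\eta]=\sup_{Q\in\Theta_0}E_Q[\eta]$ for bounded measurable $\eta$. Then for every $P\in\Theta$ and every bounded $\mathcal{F}$-measurable $\xi:\Omega\to\mathbb{R}$, the limit $\lim_{n\to\infty}\frac1n\sum_{k=0}^{n-1}\xi(T^k\omega)$ exists $P$-a.s. and $$-\mathbb{E}^0[-\xi]\le \lim_{n\to\infty}\frac1n\sum_{k=0}^{n-1}\xi(T^k\omega)\le \mathbb{E}^0[\xi],\quad P\text{-a.s.}$$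
   Context: $\mathcal{I}=\{A\in\mathcal{F}: T^{-1}A=A\}$ is the $T$-invariant $\sigma$-algebra. $\mathbb{V}$ is continuous if $\mathbb{V}(A_n)\to 0$ whenever $A_n\in\mathcal{F}$, $A_n\downarrow\emptyset$. $\mathbb{V}$ is $T$-invariant if $\mathbb{V}(T^{-1}A)=\mathbb{V}(A)$ for all $A\in\mathcal{F}$. A continuous upper probability $\mathbb{V}$ is $T$-ergodic if $\mathbb{V}(A)\in\{0,1\}$ for every $A\in\mathcal{I}$. A probability $P$ is $T$-invariant if $P(T^{-1}A)=P(A)$ for all $A\in\mathcal{F}$. *)

theory Defs
  imports "HOL-Probability.Probability"
begin

definition dominated_probs :: "'a measure \<Rightarrow> ('a set \<Rightarrow> real) \<Rightarrow> 'a measure set" where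
  "dominated_probs M V =
     {P. prob_space P \<and> sets P = sets M \<and> (\<forall>A\<in>sets M. measure P A \<le> V A)}"

definition invariant_sets :: "'a measure \<Rightarrow> ('a \<Rightarrow> 'a) \<Rightarrow> 'a set set" where
  "invariant_sets M T = {A \<in> sets M. T -` A \<inter> space M = A}"

definition upper_continuous :: "'a measure \<Rightarrow> ('a set \<Rightarrow> real) \<Rightarrow> bool" where
  "upper_continuous M V \<longleftrightarrow>
     (\<forall>An :: nat \<Rightarrow> 'a set. range An \<subseteq> sets M \<longrightarrow> decseq An \<longrightarrow> (\<Inter>n. An n) = {}
        \<longrightarrow> (\<lambda>n. V (An n)) \<longlonglongrightarrow> 0)"

definition V_invariant :: "'a measure \<Rightarrow> ('a \<Rightarrow> 'a) \<Rightarrow> ('a set \<Rightarrow> real) \<Rightarrow> bool" where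
  "V_invariant M T V \<longleftrightarrow> (\<forall>A\<in>sets M. V (T -` A \<inter> space M) = V A)"

definition V_ergodic :: "'a measure \<Rightarrow> ('a \<Rightarrow> 'a) \<Rightarrow> ('a set \<Rightarrow> real) \<Rightarrow> bool" where
  "V_ergodic M T V \<longleftrightarrow> upper_continuous M V \<and> (\<forall>A\<in>invariant_sets M T. V A \<in> {0, 1})"

definition prob_invariant :: "'a measure \<Rightarrow> ('a \<Rightarrow> 'a) \<Rightarrow> bool" where
  "prob_invariant P T \<longleftrightarrow> (\<forall>A\<in>sets P. measure P (T -` A \<inter> space P) = measure P A)"

definition invariant_dominated_probs ::
  "'a measure \<Rightarrow> ('a \<Rightarrow> 'a) \<Rightarrow> ('a set \<Rightarrow> real) \<Rightarrow> 'a measure set" where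
  "invariant_dominated_probs M T V = {Q \<in> dominated_probs M V. prob_invariant Q T}"

definition upper_exp0 ::
  "'a measure \<Rightarrow> ('a \<Rightarrow> 'a) \<Rightarrow> ('a set \<Rightarrow> real) \<Rightarrow> ('a \<Rightarrow> real) \<Rightarrow> real" where
  "upper_exp0 M T V \<eta> = (SUP Q \<in> invariant_dominated_probs M T V. integral\<^sup>L Q \<eta>)"

end

theory Submission
  imports Defs
begin

lemma cluster_point:
  fixes \<mu> :: "nat \<Rightarrow> ('b \<Rightarrow> real)"
  assumes "\<And>n x. \<mu> n x \<in> {0..1}"
  obtains q where "\<And>S. closed S \<Longrightarrow> eventually (\<lambda>n. \<mu> n \<in> S) sequentially \<Longrightarrow> q \<in> S"
proof -
  have "compactin (product_topology (\<lambda>_. euclidean) UNIV) (PiE UNIV (\<lambda>_::'b. {0..1::real}))"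
    by (simp add: compactin_PiE)
  then have K: "compact (PiE UNIV (\<lambda>_::'b. {0..1::real}))"
    by (simp add: euclidean_product_topology)
  have ev: "eventually (\<lambda>x. x \<in> PiE UNIV (\<lambda>_::'b. {0..1::real})) (filtermap \<mu> sequentially)"
    using assms by (auto simp: eventually_filtermap PiE_iff)
  have nb: "filtermap \<mu> sequentially \<noteq> bot" by (simp add: filtermap_bot_iff)
  from K[unfolded compact_filter, rule_format, OF nb ev] obtain q where
    q: "inf (nhds q) (filtermap \<mu> sequentially) \<noteq> bot" by blast
  show ?thesis
  proof (rule that)
    fix S assume S: "closed S" "eventually (\<lambda>n. \<mu> n \<in> S) sequentially"
    show "q \<in> S"
    proof (rule ccontr)
      assume "q \<notin> S"
      then have "eventually (\<lambda>x. x \<in> - S) (nhds q)"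
        using S(1) by (intro eventually_nhds_in_open) auto
      moreover have "eventually (\<lambda>x. x \<in> S) (filtermap \<mu> sequentially)"
        using S(2) by (simp add: eventually_filtermap)
      ultimately have "eventually (\<lambda>x. False) (inf (nhds q) (filtermap \<mu> sequentially))"
        unfolding eventually_inf by blast
      then show False using q by (simp add: eventually_False)
    qed
  qed
qed

lemma funpow_meas:
  assumes "T \<in> measurable M M" shows "(T ^^ k) \<in> measurable M M"
proof (induction k)
  case 0 then show ?case by (simp only: funpow.simps(1) measurable_ident)
next
  case (Suc k) then show ?case unfolding funpow_Suc_right by (rule measurable_comp[OF assms])
qed

lemma funpow_space:
  assumes "T \<in> measurable M M" "x \<in> space M" shows "(T ^^ k) x \<in> space M"
  by (rule measurable_space[OF funpow_meas[OF assms(1)] assms(2)])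

lemma pre_Suc:
  assumes "T \<in> measurable M M"
  shows "(T ^^ Suc k) -` A \<inter> space M = T -` ((T ^^ k) -` A \<inter> space M) \<inter> space M"
  using measurable_space[OF assms]
  by (intro set_eqI iffI) (simp_all del: funpow.simps add: funpow_Suc_right)

lemma pre_Suc':
  assumes "T \<in> measurable M M"
  shows "(T ^^ k) -` (T -` A \<inter> space M) \<inter> space M = (T ^^ Suc k) -` A \<inter> space M"
proof -
  have "\<And>x. x \<in> space M \<Longrightarrow> (T ^^ k) x \<in> space M" using funpow_space[OF assms] .
  then show ?thesis by (intro set_eqI iffI) (simp_all add: measurable_space[OF assms])
qed

lemma V_pre:
  assumes "T \<in> measurable M M" "V_invariant M T V" "A \<in> sets M"
  shows "V ((T ^^ k) -` A \<inter> space M) = V A"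
proof (induction k)
  case 0 then show ?case using sets.sets_into_space[OF assms(3)] by (simp add: Int_absorb2)
next
  case (Suc k)
  have "(T ^^ k) -` A \<inter> space M \<in> sets M"
    using funpow_meas[OF assms(1)] assms(3) by (rule measurable_sets)
  then show ?case using Suc assms(2) unfolding V_invariant_def pre_Suc[OF assms(1)] by metis
qed

lemma pre_inv:
  assumes "T \<in> measurable M M" "A \<in> invariant_sets M T"
  shows "(T ^^ k) -` A \<inter> space M = A"
proof (induction k)
  case 0
  have "A \<in> sets M" using assms(2) unfolding invariant_sets_def by blast
  then have "A \<subseteq> space M" by (rule sets.sets_into_space)
  then show ?case by (simp add: Int_absorb2)
next
  case (Suc k)
  have "T -` A \<inter> space M = A" using assms(2) unfolding invariant_sets_def by blast
  then show ?case unfolding pre_Suc[OF assms(1)] Suc .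
qed

lemma closed_coord_le: "closed {f :: 'b \<Rightarrow> real. f A \<le> c}"
  by (rule closed_Collect_le) (auto intro: continuous_on_const)

lemma closed_coord_ge: "closed {f :: 'b \<Rightarrow> real. c \<le> f A}"
  by (rule closed_Collect_le) (auto intro: continuous_on_const)

lemma closed_coord_eq: "closed {f :: 'b \<Rightarrow> real. f A = f B + f C}"
  by (rule closed_Collect_eq) (auto intro!: continuous_intros)

lemma closed_coord_abs: "closed {f :: 'b \<Rightarrow> real. \<bar>f A - f B\<bar> \<le> e}"
  by (rule closed_Collect_le) (auto intro!: continuous_intros)

lemma invariant_extension:
  assumes T_meas: "T \<in> measurable M M"
    and V_cont: "upper_continuous M V"
    and V_inv: "V_invariant M T V"
    and P_in: "P \<in> dominated_probs M V"
  obtains Q where "Q \<in> invariant_dominated_probs M T V"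
    "\<And>A. A \<in> invariant_sets M T \<Longrightarrow> measure Q A = measure P A"
proof -
  interpret P: prob_space P using P_in by (simp add: dominated_probs_def)
  have setsP: "sets P = sets M" and domP: "\<And>A. A \<in> sets M \<Longrightarrow> measure P A \<le> V A"
    using P_in by (auto simp: dominated_probs_def)
  have spP: "space P = space M" using setsP by (rule sets_eq_imp_space_eq)
  define pre where "pre k A = (T ^^ k) -` A \<inter> space M" for k A
  have pre_sets: "pre k A \<in> sets M" if "A \<in> sets M" for k A
    unfolding pre_def using funpow_meas[OF T_meas] that by (rule measurable_sets)
  define \<mu> where "\<mu> n A = (if A \<in> sets M then (\<Sum>k<Suc n. measure P (pre k A)) / real (Suc n) else 0)"
    for n A
  have \<mu>01: "\<mu> n A \<in> {0..1}" for n A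
  proof -
    have "(\<Sum>k<Suc n. measure P (pre k A)) \<le> (\<Sum>k<Suc n. 1)"
      by (intro sum_mono) simp
    moreover have "0 \<le> (\<Sum>k<Suc n. measure P (pre k A))" by (intro sum_nonneg) simp
    ultimately show ?thesis by (auto simp: \<mu>_def field_simps)
  qed
  obtain q where q: "\<And>S. closed S \<Longrightarrow> eventually (\<lambda>n. \<mu> n \<in> S) sequentially \<Longrightarrow> q \<in> S"
    using cluster_point[of \<mu>, OF \<mu>01] by blast
  have q_nonneg: "0 \<le> q A" for A
    using q[OF closed_coord_ge[of 0 A]] \<mu>01 by auto
  have q_le_V: "q A \<le> V A" if "A \<in> sets M" for A
  proof -
    have "\<mu> n A \<le> V A" for n
    proof -
      have "(\<Sum>k<Suc n. measure P (pre k A)) \<le> (\<Sum>k<Suc n. V A)"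
        using domP[OF pre_sets[OF that]] V_pre[OF T_meas V_inv that]
        by (intro sum_mono) (simp add: pre_def)
      then show ?thesis using that by (simp add: \<mu>_def field_simps)
    qed
    then show ?thesis using q[OF closed_coord_le[of A "V A"]] by auto
  qed
  have q_add: "q (A \<union> B) = q A + q B" if "A \<in> sets M" "B \<in> sets M" "A \<inter> B = {}" for A B
  proof -
    have "\<mu> n (A \<union> B) = \<mu> n A + \<mu> n B" for n
    proof -
      have "measure P (pre k (A \<union> B)) = measure P (pre k A) + measure P (pre k B)" for k
      proof -
        have "pre k (A \<union> B) = pre k A \<union> pre k B" "pre k A \<inter> pre k B = {}"
          using that(3) by (auto simp: pre_def)
        then show ?thesis using pre_sets that setsP
          by (simp add: P.finite_measure_Union)
      qed
      then show ?thesis using that by (simp add: \<mu>_def sum.distrib add_divide_distrib)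
    qed
    then show ?thesis using q[OF closed_coord_eq[of "A \<union> B" A B]] by auto
  qed
  have q_space: "q (space M) = 1"
  proof -
    have "pre k (space M) = space M" for k
      using funpow_space[OF T_meas] by (auto simp: pre_def)
    then have "\<mu> n (space M) = 1" for n
      using P.prob_space spP by (simp add: \<mu>_def)
    then show ?thesis using q[OF closed_coord_le[of "space M" 1]] q[OF closed_coord_ge[of 1 "space M"]]
      by auto
  qed
  have q_inv_set: "q A = measure P A" if "A \<in> invariant_sets M T" for A
  proof -
    have AM: "A \<in> sets M" using that by (simp add: invariant_sets_def)
    have "\<mu> n A = measure P A" for n
      using pre_inv[OF T_meas that] AM by (simp add: \<mu>_def pre_def)
    then show ?thesis using q[OF closed_coord_le[of A "measure P A"]] q[OF closed_coord_ge[of "measure P A" A]]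
      by auto
  qed
  have q_T: "q (T -` A \<inter> space M) = q A" if "A \<in> sets M" for A
  proof -
    have TA: "T -` A \<inter> space M \<in> sets M" using T_meas that by (rule measurable_sets)
    have "\<bar>q (T -` A \<inter> space M) - q A\<bar> \<le> e" if "e > 0" for e
    proof -
      have E: "eventually (\<lambda>n. 1 / real (Suc n) \<le> e) sequentially"
      proof -
        obtain N :: nat where N: "1 / e < real N" using reals_Archimedean2 by blast
        show ?thesis
        proof (rule eventually_sequentiallyI[of N])
          fix n assume "N \<le> n"
          then have "1 / e < real (Suc n)" using N by linarith
          then show "1 / real (Suc n) \<le> e" using \<open>e > 0\<close> by (simp add: field_simps)
        qed
      qed
      moreover have B: "\<bar>\<mu> n (T -` A \<inter> space M) - \<mu> n A\<bar> \<le> 1 / real (Suc n)" for n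
      proof -
        have pk: "pre k (T -` A \<inter> space M) = pre (Suc k) A" for k
          unfolding pre_def by (rule pre_Suc'[OF T_meas])
        have "(\<Sum>k<Suc n. measure P (pre k (T -` A \<inter> space M))) - (\<Sum>k<Suc n. measure P (pre k A))
              = measure P (pre (Suc n) A) - measure P (pre 0 A)"
          unfolding pk sum_subtractf[symmetric] by (rule sum_lessThan_telescope)
        then have "\<bar>(\<Sum>k<Suc n. measure P (pre k (T -` A \<inter> space M))) - (\<Sum>k<Suc n. measure P (pre k A))\<bar> \<le> 1"
          by (simp add: abs_le_iff) (smt (verit) P.prob_le_1 measure_nonneg)
        then have "\<bar>((\<Sum>k<Suc n. measure P (pre k (T -` A \<inter> space M))) - (\<Sum>k<Suc n. measure P (pre k A))) / real (Suc n)\<bar> \<le> 1 / real (Suc n)"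
          unfolding abs_divide abs_of_nat by (intro divide_right_mono) auto
        then show ?thesis using TA \<open>A \<in> sets M\<close>
          by (simp only: \<mu>_def if_True diff_divide_distrib)
      qed
      have "eventually (\<lambda>n. \<bar>\<mu> n (T -` A \<inter> space M) - \<mu> n A\<bar> \<le> e) sequentially"
        using E by (rule eventually_mono) (rule order_trans[OF B])
      then show ?thesis using q[OF closed_coord_abs[of "T -` A \<inter> space M" A e]] by auto
    qed
    then have "\<bar>q (T -` A \<inter> space M) - q A\<bar> \<le> 0"
      by (rule field_le_epsilon) simp
    then show ?thesis by simp
  qed
  define f where "f A = ennreal (q A)" for A
  have "q ({} \<union> {}) = q {} + q {}" by (rule q_add) auto
  then have "q {} = q {} + q {}" unfolding Un_absorb .
  then have q_empty: "q {} = 0" by linarith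
  have pos: "positive (sets M) f" by (simp add: positive_def f_def q_empty)
  have add: "additive (sets M) f"
    unfolding additive_def f_def
  proof (intro ballI impI)
    fix A B assume "A \<in> sets M" "B \<in> sets M" "A \<inter> B = {}"
    then have "q (A \<union> B) = q A + q B" by (rule q_add)
    then show "ennreal (q (A \<union> B)) = ennreal (q A) + ennreal (q B)"
      using q_nonneg by (metis ennreal_plus)
  qed
  have ca: "countably_additive (sets M) f"
  proof (rule sets.empty_continuous_imp_countably_additive[OF pos add])
    show "\<forall>A\<in>sets M. f A \<noteq> \<infinity>" by (simp add: f_def)
    fix A :: "nat \<Rightarrow> 'a set" assume A: "range A \<subseteq> sets M" "decseq A" "(\<Inter>i. A i) = {}"
    have "(\<lambda>i. V (A i)) \<longlonglongrightarrow> 0" using V_cont A unfolding upper_continuous_def by blast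
    have "(\<lambda>i. q (A i)) \<longlonglongrightarrow> 0"
    proof (rule tendsto_sandwich[of "\<lambda>_. 0" _ _ "\<lambda>i. V (A i)"])
      show "\<forall>\<^sub>F n in sequentially. 0 \<le> q (A n)" using q_nonneg by simp
      show "\<forall>\<^sub>F n in sequentially. q (A n) \<le> V (A n)" using q_le_V A(1) by auto
    qed (auto intro: \<open>(\<lambda>i. V (A i)) \<longlonglongrightarrow> 0\<close>)
    then show "(\<lambda>i. f (A i)) \<longlonglongrightarrow> 0" unfolding f_def
      using tendsto_ennrealI[of "\<lambda>i. q (A i)" 0 sequentially] by simp
  qed
  define Q where "Q = measure_of (space M) (sets M) f"
  have sQ: "sets Q = sets M" unfolding Q_def
    using sets.space_closed by (simp add: sets_measure_of sets.sigma_sets_eq)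
  have spQ: "space Q = space M" unfolding Q_def by (rule space_measure_of_conv)
  have eQ: "emeasure Q A = f A" if "A \<in> sets M" for A
    unfolding Q_def by (rule emeasure_measure_of_sigma[OF sets.sigma_algebra_axioms pos ca that])
  have mQ: "measure Q A = q A" if "A \<in> sets M" for A
    using eQ[OF that] q_nonneg by (simp add: measure_def f_def)
  have pQ: "prob_space Q"
    by (rule prob_spaceI) (simp add: spQ eQ f_def q_space)
  show ?thesis
  proof (rule that)
    show "Q \<in> invariant_dominated_probs M T V"
      unfolding invariant_dominated_probs_def dominated_probs_def prob_invariant_def
    proof (intro CollectI conjI ballI)
      show "prob_space Q" by (rule pQ)
      show "sets Q = sets M" by (rule sQ)
    next
      fix A assume "A \<in> sets M" then show "measure Q A \<le> V A" using mQ q_le_V by simp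
    next
      fix A assume A: "A \<in> sets Q"
      have "T -` A \<inter> space M \<in> sets M" using T_meas A sQ by (metis measurable_sets)
      then show "measure Q (T -` A \<inter> space Q) = measure Q A"
        using A sQ spQ mQ q_T by metis
    qed
    fix A assume "A \<in> invariant_sets M T"
    then have "A \<in> sets M" unfolding invariant_sets_def by blast
    then show "measure Q A = measure P A" using mQ q_inv_set \<open>A \<in> invariant_sets M T\<close> by metis
  qed
qed

definition avg :: "('a \<Rightarrow> 'a) \<Rightarrow> ('a \<Rightarrow> real) \<Rightarrow> nat \<Rightarrow> 'a \<Rightarrow> real" where
  "avg T g n x = (\<Sum>k<n. g ((T ^^ k) x)) / real n"

definition ls :: "('a \<Rightarrow> 'a) \<Rightarrow> ('a \<Rightarrow> real) \<Rightarrow> 'a \<Rightarrow> real" where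
  "ls T g x = real_of_ereal (limsup (\<lambda>n. ereal (avg T g n x)))"

context
  fixes M :: "'a measure" and T :: "'a \<Rightarrow> 'a" and g :: "'a \<Rightarrow> real" and B :: real
  assumes T: "T \<in> measurable M M" and B: "\<And>y. y \<in> space M \<Longrightarrow> \<bar>g y\<bar> \<le> B"
begin

lemma avg_bound:
  assumes x: "x \<in> space M"
  shows "\<bar>avg T g n x\<bar> \<le> B"
proof -
  have B0: "0 \<le> B" using B[OF x] by linarith
  have "\<bar>\<Sum>k<n. g ((T ^^ k) x)\<bar> \<le> (\<Sum>k<n. \<bar>g ((T ^^ k) x)\<bar>)" by (rule sum_abs)
  also have "\<dots> \<le> (\<Sum>k<n. B)" by (intro sum_mono B funpow_space[OF T x])
  also have "\<dots> = real n * B" by simp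
  finally have *: "\<bar>\<Sum>k<n. g ((T ^^ k) x)\<bar> \<le> real n * B" .
  show ?thesis
  proof (cases "n = 0")
    case True then show ?thesis using B0 by (simp add: avg_def)
  next
    case False
    then show ?thesis using * by (simp add: avg_def abs_divide field_simps)
  qed
qed

lemma ls_ereal:
  assumes x: "x \<in> space M"
  shows "limsup (\<lambda>n. ereal (avg T g n x)) = ereal (ls T g x)"
    and "\<bar>ls T g x\<bar> \<le> B"
proof -
  have ab: "- B \<le> avg T g n x" "avg T g n x \<le> B" for n
    using avg_bound[OF x, of n] by (auto simp: abs_le_iff)
  have le: "limsup (\<lambda>n. ereal (avg T g n x)) \<le> ereal B"
    using ab by (intro Limsup_bounded always_eventually) auto
  have ge: "ereal (- B) \<le> limsup (\<lambda>n. ereal (avg T g n x))"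
    using ab by (intro le_Limsup always_eventually sequentially_bot) auto
  from le ge show "limsup (\<lambda>n. ereal (avg T g n x)) = ereal (ls T g x)"
    unfolding ls_def by (cases "limsup (\<lambda>n. ereal (avg T g n x))") auto
  with le ge show "\<bar>ls T g x\<bar> \<le> B" by (auto simp: abs_le_iff)
qed

lemma ls_approx:
  assumes x: "x \<in> space M"
    and e: "e > 0"
  shows "\<exists>n\<ge>1. ls T g x - e \<le> avg T g n x"
proof (rule ccontr)
  assume "\<not> ?thesis"
  then have "\<forall>n\<ge>1. avg T g n x \<le> ls T g x - e" by auto
  then have "eventually (\<lambda>n. ereal (avg T g n x) \<le> ereal (ls T g x - e)) sequentially"
    by (auto simp: eventually_sequentially)
  then have "limsup (\<lambda>n. ereal (avg T g n x)) \<le> ereal (ls T g x - e)"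
    by (rule Limsup_bounded)
  then show False using ls_ereal(1)[OF x] e by simp
qed

lemma avg_Suc:
  assumes "n > 0"
  shows "avg T g (Suc n) x = (g x + real n * avg T g n (T x)) / real (Suc n)"
proof -
  have "(\<Sum>k<Suc n. g ((T ^^ k) x)) = g x + (\<Sum>k<n. g ((T ^^ Suc k) x))"
    unfolding sum.lessThan_Suc_shift by simp
  also have "(\<Sum>k<n. g ((T ^^ Suc k) x)) = (\<Sum>k<n. g ((T ^^ k) (T x)))"
    by (simp only: funpow_Suc_right o_def)
  finally show ?thesis using assms by (simp add: avg_def)
qed

lemma ls_T:
  assumes x: "x \<in> space M"
  shows "ls T g (T x) = ls T g x"
proof -
  have Tx: "T x \<in> space M" using T x by (rule measurable_space)
  define a where "a n = avg T g (Suc n) x" for n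
  define b where "b n = avg T g n (T x)" for n
  have "(\<lambda>n. a n - b n) \<longlonglongrightarrow> 0"
  proof (rule tendsto_sandwich[of "\<lambda>n. - (2 * B) / real (Suc n)" _ _ "\<lambda>n. 2 * B / real (Suc n)"])
    have d: "a n - b n = (g x - b n) / real (Suc n)" if "n > 0" for n
      using avg_Suc[OF that, of x] unfolding a_def b_def by (simp add: field_simps)
    have bb: "\<bar>b n\<bar> \<le> B" for n unfolding b_def by (rule avg_bound[OF Tx])
    have gx: "\<bar>g x\<bar> \<le> B" by (rule B[OF x])
    have "\<bar>a n - b n\<bar> \<le> 2 * B / real (Suc n)" if "n > 0" for n
    proof -
      have "\<bar>g x - b n\<bar> \<le> 2 * B" using bb[of n] gx by linarith
      then show ?thesis unfolding d[OF that] abs_divide by (simp add: divide_right_mono)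
    qed
    then have ev: "eventually (\<lambda>n. \<bar>a n - b n\<bar> \<le> 2 * B / real (Suc n)) sequentially"
      by (auto simp: eventually_sequentially intro!: exI[of _ 1])
    show "eventually (\<lambda>n. - (2 * B) / real (Suc n) \<le> a n - b n) sequentially"
      using ev by (rule eventually_mono) (simp add: abs_le_iff)
    show "eventually (\<lambda>n. a n - b n \<le> 2 * B / real (Suc n)) sequentially"
      using ev by (rule eventually_mono) (simp add: abs_le_iff)
    show "(\<lambda>n. - (2 * B) / real (Suc n)) \<longlonglongrightarrow> 0"
      using tendsto_mult[OF tendsto_const LIMSEQ_inverse_real_of_nat, of "- (2 * B)"]
      by (simp add: divide_inverse)
    show "(\<lambda>n. 2 * B / real (Suc n)) \<longlonglongrightarrow> 0"
      using tendsto_mult[OF tendsto_const LIMSEQ_inverse_real_of_nat, of "2 * B"]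
      by (simp add: divide_inverse)
  qed
  then have u: "(\<lambda>n. ereal (a n - b n)) \<longlonglongrightarrow> ereal 0" by (intro tendsto_intros) simp
  have "ereal (ls T g x) = limsup (\<lambda>n. ereal (avg T g n x))" using ls_ereal(1)[OF x] by simp
  also have "\<dots> = limsup (\<lambda>n. ereal (a n))" unfolding a_def
    using limsup_shift[of "\<lambda>n. ereal (avg T g n x)"] by simp
  also have "\<dots> = limsup (\<lambda>n. ereal (a n - b n) + ereal (b n))" by simp
  also have "\<dots> = ereal 0 + limsup (\<lambda>n. ereal (b n))"
    by (rule ereal_limsup_lim_add[OF u]) simp
  also have "\<dots> = ereal (ls T g (T x))" unfolding b_def using ls_ereal(1)[OF Tx] by simp
  finally show ?thesis by simp
qed

end

lemma ls_meas:
  assumes T: "T \<in> measurable M M" and g: "g \<in> borel_measurable M"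
  shows "ls T g \<in> borel_measurable M"
proof -
  have k: "(\<lambda>x. g ((T ^^ k) x)) \<in> borel_measurable M" for k
    using measurable_comp[OF funpow_meas[OF T] g] by (simp add: o_def)
  have "(\<lambda>x. avg T g n x) \<in> borel_measurable M" for n
    unfolding avg_def using k by measurable
  then show ?thesis unfolding ls_def by measurable
qed

lemma sum_lessThan_add_split:
  "(\<Sum>k<n + m. f k) = (\<Sum>k<n. f k) + (\<Sum>k<m. f (n + k :: nat)) " for f :: "nat \<Rightarrow> real"
  by (induction m) (simp_all add: add.assoc)

lemma tiling:
  fixes S :: "'a \<Rightarrow> 'a" and h :: "'a \<Rightarrow> real"
  assumes SY: "\<And>y. y \<in> Y \<Longrightarrow> S y \<in> Y"
    and hC: "\<And>y. y \<in> Y \<Longrightarrow> - C \<le> h y" and C: "0 \<le> C"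
    and blk: "\<And>y. y \<in> Y \<Longrightarrow> \<exists>n. 1 \<le> n \<and> n \<le> N \<and> 0 \<le> (\<Sum>k<n. h ((S ^^ k) y))"
  shows "y \<in> Y \<Longrightarrow> - C * real N \<le> (\<Sum>k<L. h ((S ^^ k) y))"
proof (induction L arbitrary: y rule: less_induct)
  case (less L)
  have SkY: "(S ^^ k) z \<in> Y" if "z \<in> Y" for k z
    using that by (induction k) (auto intro: SY)
  show ?case
  proof (cases "L \<le> N")
    case True
    have "(\<Sum>k<L. - C) \<le> (\<Sum>k<L. h ((S ^^ k) y))"
      by (intro sum_mono hC SkY less.prems)
    moreover have "real L * C \<le> real N * C" using True C by (intro mult_right_mono) auto
    then have "- C * real N \<le> (\<Sum>k<L. - C)" by (simp add: mult.commute)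
    ultimately show ?thesis by linarith
  next
    case False
    obtain n where n: "1 \<le> n" "n \<le> N" "0 \<le> (\<Sum>k<n. h ((S ^^ k) y))" using blk[OF less.prems] by blast
    have L: "L = n + (L - n)" using n False by simp
    have IH: "- C * real N \<le> (\<Sum>k<L - n. h ((S ^^ k) ((S ^^ n) y)))"
      using n False by (intro less.IH SkY less.prems) auto
    have "(\<Sum>k<L. h ((S ^^ k) y)) = (\<Sum>k<n. h ((S ^^ k) y)) + (\<Sum>k<L - n. h ((S ^^ (n + k)) y))"
      by (subst L) (rule sum_lessThan_add_split)
    also have "(\<Sum>k<L - n. h ((S ^^ (n + k)) y)) = (\<Sum>k<L - n. h ((S ^^ k) ((S ^^ n) y)))"
      by (simp add: funpow_add add.commute)
    finally show ?thesis using IH n(3) by linarith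
  qed
qed

context
  fixes M :: "'a measure" and T :: "'a \<Rightarrow> 'a"
  assumes PM: "prob_space M" and T: "T \<in> measurable M M" and inv: "prob_invariant M T"
begin

interpretation prob_space M by (rule PM)

lemma distr_T: "distr M M T = M"
proof (rule measure_eqI)
  show "sets (distr M M T) = sets M" by simp
  fix A assume A: "A \<in> sets (distr M M T)"
  then have A': "A \<in> sets M" by simp
  have TA: "T -` A \<inter> space M \<in> sets M" using T A' by (rule measurable_sets)
  have "emeasure (distr M M T) A = emeasure M (T -` A \<inter> space M)"
    using T A' by (rule emeasure_distr)
  also have "\<dots> = measure M (T -` A \<inter> space M)" using TA by (simp add: emeasure_eq_measure)
  also have "\<dots> = measure M A" using inv A' by (simp add: prob_invariant_def)
  also have "\<dots> = emeasure M A" using A' by (simp add: emeasure_eq_measure)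
  finally show "emeasure (distr M M T) A = emeasure M A" .
qed

lemma integral_funpow:
  fixes h :: "'a \<Rightarrow> real"
  assumes h: "h \<in> borel_measurable M"
  shows "integral\<^sup>L M (\<lambda>x. h ((T ^^ k) x)) = integral\<^sup>L M h"
proof (induction k)
  case 0 then show ?case by simp
next
  case (Suc k)
  have hk: "(\<lambda>x. h ((T ^^ k) x)) \<in> borel_measurable M"
    using measurable_comp[OF funpow_meas[OF T] h] by (simp add: o_def)
  have "integral\<^sup>L M (\<lambda>x. h ((T ^^ Suc k) x)) = integral\<^sup>L M (\<lambda>x. h ((T ^^ k) (T x)))"
    by (simp only: funpow_Suc_right o_def)
  also have "\<dots> = integral\<^sup>L (distr M M T) (\<lambda>x. h ((T ^^ k) x))"
    using integral_distr[of T M M "\<lambda>x. h ((T ^^ k) x)", OF T hk] by simp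
  also have "\<dots> = integral\<^sup>L M h" unfolding distr_T by (rule Suc)
  finally show ?case .
qed

end

lemma avg_meas:
  assumes T: "T \<in> measurable M M" and g: "g \<in> borel_measurable M"
  shows "(\<lambda>x. avg T g n x) \<in> borel_measurable M"
proof -
  have k: "(\<lambda>x. g ((T ^^ k) x)) \<in> borel_measurable M" for k
    using measurable_comp[OF funpow_meas[OF T] g] by (simp add: o_def)
  show ?thesis unfolding avg_def using k by measurable
qed

context
  fixes M :: "'a measure" and T :: "'a \<Rightarrow> 'a" and g :: "'a \<Rightarrow> real" and B :: real
  assumes PM: "prob_space M" and T: "T \<in> measurable M M" and inv: "prob_invariant M T"
    and gm: "g \<in> borel_measurable M" and B: "\<And>y. y \<in> space M \<Longrightarrow> \<bar>g y\<bar> \<le> B"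
begin

interpretation prob_space M by (rule PM)

lemma ls_funpow: "y \<in> space M \<Longrightarrow> ls T g ((T ^^ k) y) = ls T g y"
proof (induction k)
  case 0 then show ?case by simp
next
  case (Suc k)
  have "ls T g ((T ^^ Suc k) y) = ls T g (T ((T ^^ k) y))" by simp
  also have "\<dots> = ls T g ((T ^^ k) y)" by (rule ls_T[OF T B funpow_space[OF T Suc.prems]])
  finally show ?case using Suc by simp
qed

lemma bdd_integrable:
  fixes h :: "'a \<Rightarrow> real"
  assumes "h \<in> borel_measurable M" "\<And>x. x \<in> space M \<Longrightarrow> \<bar>h x\<bar> \<le> C"
  shows "integrable M h"
  using assms by (intro integrable_const_bound[where B=C] AE_I2) auto

lemma ls_step:
  assumes e: "e > 0"
  shows "integral\<^sup>L M (ls T g) \<le> integral\<^sup>L M g + e + 2 * B * measure M {x \<in> space M. \<forall>n\<in>{1..Suc N}. avg T g n x < ls T g x - e}"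
proof -
  define f where "f = ls T g"
  define E where "E = {x \<in> space M. \<forall>n\<in>{1..Suc N}. avg T g n x < f x - e}"
  have fm[measurable]: "f \<in> borel_measurable M" unfolding f_def by (rule ls_meas[OF T gm])
  have am[measurable]: "(\<lambda>x. avg T g n x) \<in> borel_measurable M" for n by (rule avg_meas[OF T gm])
  have gm'[measurable]: "g \<in> borel_measurable M" by (rule gm)
  have fB: "\<bar>f x\<bar> \<le> B" if "x \<in> space M" for x unfolding f_def by (rule ls_ereal(2)[OF T B that])
  have gB: "\<bar>g x\<bar> \<le> B" if "x \<in> space M" for x by (rule B[OF that])
  have f_inv: "f ((T ^^ k) x) = f x" if "x \<in> space M" for k x unfolding f_def by (rule ls_funpow[OF that])
  have Em[measurable]: "E \<in> sets M" unfolding E_def by measurable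
  define g' where "g' x = g x + (B - g x) * indicator E x" for x
  define h where "h x = g' x - f x + e" for x
  have g'm[measurable]: "g' \<in> borel_measurable M" unfolding g'_def by measurable
  have hm[measurable]: "h \<in> borel_measurable M" unfolding h_def by measurable
  have g'_ge: "g x \<le> g' x" if "x \<in> space M" for x
    using gB[OF that] by (auto simp: g'_def indicator_def)
  have g'_le: "g' x \<le> g x + 2 * B * indicator E x" if "x \<in> space M" for x
    using gB[OF that] by (auto simp: g'_def indicator_def)
  have g'_E: "g' x = B" if "x \<in> E" for x by (simp add: g'_def that)
  have hB: "\<bar>h x\<bar> \<le> 3 * B + e" if "x \<in> space M" for x
    using gB[OF that] fB[OF that] e by (auto simp: h_def g'_def indicator_def abs_le_iff)
  have h_low: "- (2 * B) \<le> h x" if "x \<in> space M" for x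
    using gB[OF that] fB[OF that] e by (auto simp: h_def g'_def indicator_def abs_le_iff)
  have B0: "0 \<le> B"
  proof -
    obtain x where "x \<in> space M" using not_empty by blast
    then show ?thesis using gB by fastforce
  qed
  have blk: "\<exists>n. 1 \<le> n \<and> n \<le> Suc N \<and> 0 \<le> (\<Sum>k<n. h ((T ^^ k) y))" if y: "y \<in> space M" for y
  proof (cases "y \<in> E")
    case True
    then show ?thesis using fB[OF y] e by (intro exI[of _ 1]) (auto simp: h_def g'_E abs_le_iff)
  next
    case False
    then obtain n where n: "n \<in> {1..Suc N}" "f y - e \<le> avg T g n y"
      using y unfolding E_def by auto
    have "(\<Sum>k<n. h ((T ^^ k) y)) = (\<Sum>k<n. g' ((T ^^ k) y)) - real n * (f y - e)"
      using f_inv[OF y] by (simp add: h_def sum_subtractf sum.distrib algebra_simps)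
    also have "\<dots> \<ge> (\<Sum>k<n. g ((T ^^ k) y)) - real n * (f y - e)"
      using g'_ge funpow_space[OF T y] by (simp add: sum_mono)
    moreover have "(\<Sum>k<n. g ((T ^^ k) y)) = real n * avg T g n y" using n(1) by (simp add: avg_def)
    moreover have "real n * (f y - e) \<le> real n * avg T g n y" using n(2) by (simp add: mult_left_mono)
    ultimately have "0 \<le> (\<Sum>k<n. h ((T ^^ k) y))" by linarith
    then show ?thesis using n(1) by auto
  qed
  have tile: "- (2 * B) * real (Suc N) \<le> (\<Sum>k<L. h ((T ^^ k) y))" if y: "y \<in> space M" for L y
  proof (rule tiling[where Y="space M" and S=T and h=h and C="2 * B" and N="Suc N"])
    show "\<And>y. y \<in> space M \<Longrightarrow> T y \<in> space M" using T by (rule measurable_space)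
    show "\<And>y. y \<in> space M \<Longrightarrow> - (2 * B) \<le> h y" by (rule h_low)
    show "0 \<le> 2 * B" using B0 by simp
    show "\<And>y. y \<in> space M \<Longrightarrow> \<exists>n\<ge>1. n \<le> Suc N \<and> 0 \<le> (\<Sum>k<n. h ((T ^^ k) y))"
      using blk by blast
    show "y \<in> space M" by (rule y)
  qed
  have hkm: "(\<lambda>x. h ((T ^^ k) x)) \<in> borel_measurable M" for k
    using measurable_comp[OF funpow_meas[OF T] hm] by (simp add: o_def)
  have hk_int: "integrable M (\<lambda>x. h ((T ^^ k) x))" for k
    by (rule bdd_integrable[OF hkm]) (rule hB[OF funpow_space[OF T]])
  have h_int: "integrable M h" by (rule bdd_integrable[OF hm hB])
  have int_sum: "integral\<^sup>L M (\<lambda>x. \<Sum>k<L. h ((T ^^ k) x)) = real L * integral\<^sup>L M h" for L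
  proof -
    have "integral\<^sup>L M (\<lambda>x. \<Sum>k<L. h ((T ^^ k) x)) = (\<Sum>k<L. integral\<^sup>L M (\<lambda>x. h ((T ^^ k) x)))"
      using Bochner_Integration.integral_sum[where I="{..<L}" and M=M and f="\<lambda>k x. h ((T ^^ k) x)"] hk_int by simp
    also have "\<dots> = (\<Sum>k<L. integral\<^sup>L M h)" using integral_funpow[OF PM T inv hm] by simp
    finally show ?thesis by simp
  qed
  have L_bound: "- (2 * B) * real (Suc N) \<le> real L * integral\<^sup>L M h" for L
  proof -
    have "integral\<^sup>L M (\<lambda>x. - (2 * B) * real (Suc N)) \<le> integral\<^sup>L M (\<lambda>x. \<Sum>k<L. h ((T ^^ k) x))"
    proof (rule integral_mono)
      show "integrable M (\<lambda>x. \<Sum>k<L. h ((T ^^ k) x))"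
        using Bochner_Integration.integrable_sum[where I="{..<L}" and M=M and f="\<lambda>k x. h ((T ^^ k) x)"] hk_int by simp
      show "\<And>x. x \<in> space M \<Longrightarrow> - (2 * B) * real (Suc N) \<le> (\<Sum>k<L. h ((T ^^ k) x))"
        by (rule tile)
    qed simp
    then show ?thesis using int_sum[of L] by (simp add: prob_space)
  qed
  have h_nonneg: "0 \<le> integral\<^sup>L M h"
  proof (rule ccontr)
    assume "\<not> ?thesis"
    then have neg: "integral\<^sup>L M h < 0" by simp
    obtain L :: nat where L: "(2 * B) * real (Suc N) / (- integral\<^sup>L M h) < real L"
      using reals_Archimedean2 by blast
    have pos: "0 < - integral\<^sup>L M h" using neg by simp
    from L have "(2 * B) * real (Suc N) < real L * (- integral\<^sup>L M h)"
      by (simp only: pos_divide_less_eq[OF pos])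
    then show False using L_bound[of L] by simp
  qed
  have f_int: "integrable M f" by (rule bdd_integrable[OF fm fB])
  have g_int: "integrable M g" by (rule bdd_integrable[OF gm gB])
  have g'_int: "integrable M g'"
    by (rule bdd_integrable[OF g'm, where C = "3 * B"]) (use gB B0 in \<open>fastforce simp: g'_def indicator_def\<close>)
  have hh: "integral\<^sup>L M h = integral\<^sup>L M g' - integral\<^sup>L M f + e"
    unfolding h_def using g'_int f_int by (simp add: prob_space)
  have gi_int: "integrable M (\<lambda>x. g x + 2 * B * indicator E x)"
    by (rule bdd_integrable[where C = "3 * B"]) (measurable, use gB B0 in \<open>fastforce simp: indicator_def\<close>)
  moreover have "integral\<^sup>L M g' \<le> integral\<^sup>L M (\<lambda>x. g x + 2 * B * indicator E x)"
    using g'_le by (intro integral_mono g'_int gi_int) auto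
  moreover have "integral\<^sup>L M (\<lambda>x. g x + 2 * B * indicator E x) = integral\<^sup>L M g + 2 * B * measure M E"
  proof -
    have "E \<inter> space M = E" using Em sets.sets_into_space by blast
    have ii: "integrable M (\<lambda>x. 2 * B * indicator E x :: real)"
      by (rule bdd_integrable[where C = "2 * B"]) (measurable, use B0 in \<open>simp add: indicator_def\<close>)
    have "integral\<^sup>L M (\<lambda>x. g x + 2 * B * indicator E x) = integral\<^sup>L M g + integral\<^sup>L M (\<lambda>x. 2 * B * indicator E x)"
      by (rule Bochner_Integration.integral_add[OF g_int ii])
    also have "integral\<^sup>L M (\<lambda>x. 2 * B * indicator E x :: real) = 2 * B * measure M (E \<inter> space M)"
      by (simp only: integral_mult_right_zero Bochner_Integration.integral_indicator)
    finally show ?thesis using \<open>E \<inter> space M = E\<close> by simp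
  qed
  ultimately show ?thesis using h_nonneg hh unfolding E_def f_def by linarith
qed

lemma ls_integral_le: "integral\<^sup>L M (ls T g) \<le> integral\<^sup>L M g"
proof (rule field_le_epsilon)
  fix e :: real assume e: "e > 0"
  define E where "E N = {x \<in> space M. \<forall>n\<in>{1..Suc N}. avg T g n x < ls T g x - e}" for N
  have fm[measurable]: "ls T g \<in> borel_measurable M" by (rule ls_meas[OF T gm])
  have am[measurable]: "(\<lambda>x. avg T g n x) \<in> borel_measurable M" for n by (rule avg_meas[OF T gm])
  have Em: "E N \<in> sets M" for N unfolding E_def by measurable
  have dec: "decseq E"
    unfolding decseq_def E_def by auto
  have emp: "(\<Inter>N. E N) = {}"
  proof (rule ccontr)
    assume "(\<Inter>N. E N) \<noteq> {}"
    then obtain x where x: "\<And>N. x \<in> E N" by blast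
    then have xs: "x \<in> space M" unfolding E_def by blast
    obtain n where n: "n \<ge> 1" "ls T g x - e \<le> avg T g n x" using ls_approx[where M=M and T=T and g=g and B=B, OF T B xs e] by blast
    have "avg T g n x < ls T g x - e" using x[of n] n(1) unfolding E_def by auto
    then show False using n(2) by linarith
  qed
  have "(\<lambda>N. measure M (E N)) \<longlonglongrightarrow> measure M (\<Inter>N. E N)"
    using Em dec by (intro finite_Lim_measure_decseq) auto
  then have "(\<lambda>N. measure M (E N)) \<longlonglongrightarrow> 0" using emp by simp
  then have lim: "(\<lambda>N. integral\<^sup>L M g + e + 2 * B * measure M (E N)) \<longlonglongrightarrow> integral\<^sup>L M g + e + 2 * B * 0"
    by (intro tendsto_intros)
  have "\<forall>N. integral\<^sup>L M (ls T g) \<le> integral\<^sup>L M g + e + 2 * B * measure M (E N)"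
    using ls_step[OF e] unfolding E_def by blast
  then show "integral\<^sup>L M (ls T g) \<le> integral\<^sup>L M g + e"
    using LIMSEQ_le_const[OF lim] by auto
qed

end

lemma Q_facts:
  assumes Q: "Q \<in> invariant_dominated_probs M T V" and T: "T \<in> measurable M M"
  shows "prob_space Q" "sets Q = sets M" "space Q = space M" "T \<in> measurable Q Q"
    "prob_invariant Q T" "\<And>A. A \<in> sets M \<Longrightarrow> measure Q A \<le> V A"
proof -
  show "prob_space Q" "sets Q = sets M" "prob_invariant Q T" "\<And>A. A \<in> sets M \<Longrightarrow> measure Q A \<le> V A"
    using Q by (auto simp: invariant_dominated_probs_def dominated_probs_def)
  then show "space Q = space M" by (metis sets_eq_imp_space_eq)
  show "T \<in> measurable Q Q" using T measurable_cong_sets[OF \<open>sets Q = sets M\<close> \<open>sets Q = sets M\<close>] by simp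
qed

lemma Q_ls_le:
  fixes g :: "'a \<Rightarrow> real"
  assumes Q: "Q \<in> invariant_dominated_probs M T V" and T: "T \<in> measurable M M"
    and gm: "g \<in> borel_measurable M" and B: "\<And>y. y \<in> space M \<Longrightarrow> \<bar>g y\<bar> \<le> B"
  shows "integral\<^sup>L Q (ls T g) \<le> integral\<^sup>L Q g"
proof -
  note F = Q_facts[OF Q T]
  have gm': "g \<in> borel_measurable Q" using gm measurable_cong_sets[OF F(2) refl, of "borel :: real measure"] by simp
  show ?thesis
    by (rule ls_integral_le[OF F(1) F(4) F(5) gm']) (use B F(3) in auto)
qed

lemma Q_g_le_exp0:
  fixes g :: "'a \<Rightarrow> real"
  assumes Q: "Q \<in> invariant_dominated_probs M T V" and T: "T \<in> measurable M M"
    and gm: "g \<in> borel_measurable M" and B: "\<And>y. y \<in> space M \<Longrightarrow> \<bar>g y\<bar> \<le> B"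
  shows "integral\<^sup>L Q g \<le> upper_exp0 M T V g"
proof -
  have bd: "integral\<^sup>L R g \<le> B" if R: "R \<in> invariant_dominated_probs M T V" for R
  proof -
    note F = Q_facts[OF R T]
    interpret R: prob_space R by (rule F(1))
    have gm': "g \<in> borel_measurable R" using gm measurable_cong_sets[OF F(2) refl, of "borel :: real measure"] by simp
    have "integral\<^sup>L R g \<le> integral\<^sup>L R (\<lambda>_. B)"
    proof (rule integral_mono)
      show "integrable R g" by (rule R.integrable_const_bound[where B=B]) (use B F(3) gm' in auto)
    qed (use B F(3) in \<open>auto simp: abs_le_iff\<close>)
    then show ?thesis by (simp add: R.prob_space)
  qed
  show ?thesis unfolding upper_exp0_def
  proof (rule cSUP_upper[OF Q])
    show "bdd_above ((\<lambda>Q. integral\<^sup>L Q g) ` invariant_dominated_probs M T V)"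
      by (rule bdd_aboveI2[where M=B]) (rule bd)
  qed
qed


lemma ls_invariant_set:
  fixes g :: "'a \<Rightarrow> real" and Pr :: "'a \<Rightarrow> real" and c :: real
  assumes T: "T \<in> measurable M M" and gm: "g \<in> borel_measurable M"
    and B: "\<And>y. y \<in> space M \<Longrightarrow> \<bar>g y\<bar> \<le> B"
    and Pm: "Pr \<in> borel_measurable M"
    and Pr: "\<And>x. x \<in> space M \<Longrightarrow> Pr (T x) = Pr x"
  shows "{x \<in> space M. c < Pr x} \<in> invariant_sets M T"
proof -
  have Pm'[measurable]: "Pr \<in> borel_measurable M" by (rule Pm)
  have "{x \<in> space M. c < Pr x} \<in> sets M" by measurable
  moreover have "T -` {x \<in> space M. c < Pr x} \<inter> space M = {x \<in> space M. c < Pr x}"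
    using Pr measurable_space[OF T] by auto
  ultimately show ?thesis unfolding invariant_sets_def by blast
qed

lemma upper_bound_ae:
  fixes g :: "'a \<Rightarrow> real"
  assumes T_meas: "T \<in> measurable M M"
    and V_def: "\<forall>A\<in>sets M. V A = (SUP Q \<in> dominated_probs M V. measure Q A)"
    and V_cont: "upper_continuous M V"
    and V_inv: "V_invariant M T V"
    and V_erg: "V_ergodic M T V"
    and P_in: "P \<in> dominated_probs M V"
    and gm: "g \<in> borel_measurable M"
    and B: "\<And>y. y \<in> space M \<Longrightarrow> \<bar>g y\<bar> \<le> B"
  shows "AE x in P. ls T g x \<le> upper_exp0 M T V g"
proof -
  define c where "c = upper_exp0 M T V g"
  interpret P: prob_space P using P_in by (simp add: dominated_probs_def)
  have setsP: "sets P = sets M" and domP: "\<And>A. A \<in> sets M \<Longrightarrow> measure P A \<le> V A"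
    using P_in by (auto simp: dominated_probs_def)
  have spP: "space P = space M" using setsP by (rule sets_eq_imp_space_eq)
  have lsm[measurable]: "ls T g \<in> borel_measurable M" by (rule ls_meas[OF T_meas gm])
  have lsB: "\<bar>ls T g x\<bar> \<le> B" if "x \<in> space M" for x
    by (rule ls_ereal(2)[where M=M and T=T and g=g and B=B, OF T_meas B that])
  have lsT: "ls T g (T x) = ls T g x" if "x \<in> space M" for x
    by (rule ls_T[where M=M and T=T and g=g and B=B, OF T_meas B that])
  have key: "measure P {x \<in> space M. c + e < ls T g x} = 0" if e: "e > 0" for e
  proof (rule ccontr)
    define A where "A = {x \<in> space M. c + e < ls T g x}"
    have Ainv: "A \<in> invariant_sets M T" unfolding A_def
      by (rule ls_invariant_set[OF T_meas gm B lsm lsT])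
    then have Am[measurable]: "A \<in> sets M" by (simp add: invariant_sets_def)
    assume "measure P {x \<in> space M. c + e < ls T g x} \<noteq> 0"
    then have "0 < measure P A" unfolding A_def using measure_nonneg[of P] by (metis less_eq_real_def)
    then have "0 < V A" using domP[OF Am] by linarith
    then have VA: "V A = 1" using V_erg Ainv unfolding V_ergodic_def by auto
    define K where "K = \<bar>c\<bar> + e + B + 1"
    have B0: "0 \<le> B"
    proof -
      obtain x where "x \<in> space M" using P.not_empty spP by blast
      then show ?thesis using B by fastforce
    qed
    have K0: "0 < K" unfolding K_def using e B0 by simp
    define \<delta> where "\<delta> = e / K"
    have d0: "0 < \<delta>" unfolding \<delta>_def using e K0 by simp
    have "1 - \<delta> < (SUP R \<in> dominated_probs M V. measure R A)"
      using V_def Am VA d0 by simp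
    then obtain R where R: "R \<in> dominated_probs M V" "1 - \<delta> < measure R A"
    proof (subst (asm) less_cSUP_iff)
      show "dominated_probs M V \<noteq> {}" using P_in by blast
      show "bdd_above ((\<lambda>R. measure R A) ` dominated_probs M V)"
        by (rule bdd_aboveI2[where M=1]) (auto simp: dominated_probs_def intro: prob_space.prob_le_1)
    qed blast
    obtain Q where Q: "Q \<in> invariant_dominated_probs M T V"
      "\<And>A. A \<in> invariant_sets M T \<Longrightarrow> measure Q A = measure R A"
      using invariant_extension[OF T_meas V_cont V_inv R(1)] by blast
    note F = Q_facts[OF Q(1) T_meas]
    interpret Q: prob_space Q by (rule F(1))
    have QA: "1 - \<delta> < measure Q A" using Q(2)[OF Ainv] R(2) by simp
    have lsmQ: "ls T g \<in> borel_measurable Q"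
      using lsm measurable_cong_sets[OF F(2) refl, of "borel :: real measure"] by simp
    have AmQ: "A \<in> sets Q" using Am F(2) by simp
    have ls_int: "integrable Q (ls T g)"
      by (rule Q.integrable_const_bound[where B=B]) (use lsB F(3) lsmQ in auto)
    define lo where "lo x = (c + e + B) * indicator A x - B" for x
    have lo_m: "lo \<in> borel_measurable Q" unfolding lo_def using AmQ by measurable
    have lo_int: "integrable Q lo"
      by (rule Q.integrable_const_bound[where B="\<bar>c + e + B\<bar> + B"])
         (use lo_m B0 in \<open>auto simp: lo_def indicator_def\<close>)
    have "integral\<^sup>L Q lo \<le> integral\<^sup>L Q (ls T g)"
    proof (rule integral_mono[OF lo_int ls_int])
      fix x assume "x \<in> space Q"
      then have x: "x \<in> space M" using F(3) by simp
      show "lo x \<le> ls T g x"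
      proof (cases "x \<in> A")
        case True then show ?thesis unfolding lo_def A_def by simp
      next
        case False then show ?thesis using lsB[OF x] unfolding lo_def by (simp add: abs_le_iff)
      qed
    qed
    also have "\<dots> \<le> integral\<^sup>L Q g" by (rule Q_ls_le[OF Q(1) T_meas gm B])
    also have "\<dots> \<le> c" unfolding c_def by (rule Q_g_le_exp0[OF Q(1) T_meas gm B])
    finally have lo_le: "integral\<^sup>L Q lo \<le> c" .
    have "integral\<^sup>L Q lo = (c + e + B) * measure Q A - B"
    proof -
      have ii: "integrable Q (\<lambda>x. (c + e + B) * indicator A x :: real)"
        by (rule Q.integrable_const_bound[where B="\<bar>c + e + B\<bar>"])
           (use AmQ in \<open>auto simp: indicator_def\<close>)
      have "integral\<^sup>L Q lo = integral\<^sup>L Q (\<lambda>x. (c + e + B) * indicator A x) - integral\<^sup>L Q (\<lambda>x. B)"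
        unfolding lo_def by (rule Bochner_Integration.integral_diff[OF ii]) simp
      also have "integral\<^sup>L Q (\<lambda>x. (c + e + B) * indicator A x :: real) = (c + e + B) * measure Q (A \<inter> space Q)"
        by (simp only: integral_mult_right_zero Bochner_Integration.integral_indicator)
      also have "A \<inter> space Q = A" using AmQ sets.sets_into_space by blast
      finally show ?thesis by (simp add: Q.prob_space)
    qed
    with lo_le have ineq: "e \<le> (c + e + B) * (1 - measure Q A)" by (simp add: algebra_simps)
    have q1: "0 \<le> 1 - measure Q A" using Q.prob_le_1 by simp
    have "(c + e + B) * (1 - measure Q A) \<le> K * (1 - measure Q A)"
      using q1 unfolding K_def by (intro mult_right_mono) auto
    also have "\<dots> < K * \<delta>" using QA K0 by simp
    also have "\<dots> = e" unfolding \<delta>_def using K0 by simp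
    finally show False using ineq by simp
  qed
  have ae: "AE x in P. ls T g x \<le> c + 1 / real (Suc m)" for m
  proof -
    have e: "0 < 1 / real (Suc m)" by simp
    have Sm: "{x \<in> space M. c + 1 / real (Suc m) < ls T g x} \<in> sets M" by measurable
    have "emeasure P {x \<in> space M. c + 1 / real (Suc m) < ls T g x} = 0"
      using key[OF e] Sm setsP by (simp add: P.emeasure_eq_measure)
    then show ?thesis
      using Sm setsP spP by (subst AE_iff_measurable[where N="{x \<in> space M. c + 1 / real (Suc m) < ls T g x}"]) (auto simp: not_le)
  qed
  then have "AE x in P. \<forall>m. ls T g x \<le> c + 1 / real (Suc m)"
    by (simp add: AE_all_countable)
  then show ?thesis
  proof (rule eventually_mono)
    fix x assume H: "\<forall>m. ls T g x \<le> c + 1 / real (Suc m)"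
    show "ls T g x \<le> upper_exp0 M T V g" unfolding c_def[symmetric]
    proof (rule field_le_epsilon)
      fix e :: real assume "0 < e"
      then obtain n :: nat where n: "n > 0" "inverse (real n) < e" using ex_inverse_of_nat_less by blast
      then have "Suc (n - 1) = n" by simp
      then show "ls T g x \<le> c + e" using H[rule_format, of "n - 1"] n(2) by (simp add: inverse_eq_divide)
    qed
  qed
qed

lemma avg_neg: "avg T (\<lambda>y. - g y) n x = - avg T g n x"
  by (simp add: avg_def sum_negf)

lemma li_ereal:
  fixes g :: "'a \<Rightarrow> real"
  assumes T: "T \<in> measurable M M" and B: "\<And>y. y \<in> space M \<Longrightarrow> \<bar>g y\<bar> \<le> B" and x: "x \<in> space M"
  shows "liminf (\<lambda>n. ereal (avg T g n x)) = ereal (- ls T (\<lambda>y. - g y) x)"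
proof -
  have B': "\<And>y. y \<in> space M \<Longrightarrow> \<bar>- g y\<bar> \<le> B" using B by simp
  have "ereal (ls T (\<lambda>y. - g y) x) = limsup (\<lambda>n. ereal (avg T (\<lambda>y. - g y) n x))"
    using ls_ereal(1)[where M=M and T=T and g="\<lambda>y. - g y" and B=B, OF T B' x] by simp
  also have "\<dots> = limsup (\<lambda>n. - ereal (avg T g n x))" by (simp add: avg_neg)
  also have "\<dots> = - liminf (\<lambda>n. ereal (avg T g n x))" by (rule ereal_Limsup_uminus)
  finally show ?thesis by (metis ereal_uminus_uminus uminus_ereal.simps(1))
qed

lemma li_le_ls:
  fixes g :: "'a \<Rightarrow> real"
  assumes T: "T \<in> measurable M M" and B: "\<And>y. y \<in> space M \<Longrightarrow> \<bar>g y\<bar> \<le> B" and x: "x \<in> space M"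
  shows "- ls T (\<lambda>y. - g y) x \<le> ls T g x"
proof -
  have "liminf (\<lambda>n. ereal (avg T g n x)) \<le> limsup (\<lambda>n. ereal (avg T g n x))"
    by (rule Liminf_le_Limsup) simp
  then show ?thesis
    using li_ereal[OF T B x] ls_ereal(1)[where M=M and T=T and g=g and B=B, OF T B x] by simp
qed

lemma conv_from:
  fixes g :: "'a \<Rightarrow> real"
  assumes T: "T \<in> measurable M M" and B: "\<And>y. y \<in> space M \<Longrightarrow> \<bar>g y\<bar> \<le> B" and x: "x \<in> space M"
    and eq: "- ls T (\<lambda>y. - g y) x = ls T g x"
  shows "(\<lambda>n. avg T g n x) \<longlonglongrightarrow> ls T g x"
proof (rule limsup_le_liminf_real)
  show "limsup (\<lambda>n. ereal (avg T g n x)) \<le> ereal (ls T g x)"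
    using ls_ereal(1)[where M=M and T=T and g=g and B=B, OF T B x] by simp
  show "ereal (ls T g x) \<le> liminf (\<lambda>n. ereal (avg T g n x))"
    using li_ereal[OF T B x] eq by simp
qed


lemma conv_ae:
  fixes g :: "'a \<Rightarrow> real"
  assumes T_meas: "T \<in> measurable M M"
    and V_cont: "upper_continuous M V"
    and V_inv: "V_invariant M T V"
    and P_in: "P \<in> dominated_probs M V"
    and gm: "g \<in> borel_measurable M"
    and B: "\<And>y. y \<in> space M \<Longrightarrow> \<bar>g y\<bar> \<le> B"
  shows "AE x in P. - ls T (\<lambda>y. - g y) x = ls T g x"
proof -
  interpret P: prob_space P using P_in by (simp add: dominated_probs_def)
  have setsP: "sets P = sets M" using P_in by (auto simp: dominated_probs_def)
  have spP: "space P = space M" using setsP by (rule sets_eq_imp_space_eq)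
  have B': "\<And>y. y \<in> space M \<Longrightarrow> \<bar>- g y\<bar> \<le> B" using B by simp
  have gm'[measurable]: "(\<lambda>y. - g y) \<in> borel_measurable M" using gm by measurable
  have l1[measurable]: "ls T g \<in> borel_measurable M" by (rule ls_meas[OF T_meas gm])
  have l2[measurable]: "ls T (\<lambda>y. - g y) \<in> borel_measurable M" by (rule ls_meas[OF T_meas gm'])
  define Pr where "Pr x = ls T g x + ls T (\<lambda>y. - g y) x" for x
  have Prm[measurable]: "Pr \<in> borel_measurable M" unfolding Pr_def by measurable
  have Pr0: "0 \<le> Pr x" if "x \<in> space M" for x
    using li_le_ls[where M=M and T=T and g=g and B=B, OF T_meas B that] unfolding Pr_def by simp
  have PrT: "Pr (T x) = Pr x" if "x \<in> space M" for x
    unfolding Pr_def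
    using ls_T[where M=M and T=T and g=g and B=B, OF T_meas B that]
      ls_T[where M=M and T=T and g="\<lambda>y. - g y" and B=B, OF T_meas B' that] by simp
  define D where "D = {x \<in> space M. 0 < Pr x}"
  have Dinv: "D \<in> invariant_sets M T" unfolding D_def
    by (rule ls_invariant_set[OF T_meas gm B Prm PrT])
  then have Dm: "D \<in> sets M" by (simp add: invariant_sets_def)
  obtain Q where Q: "Q \<in> invariant_dominated_probs M T V"
    "\<And>A. A \<in> invariant_sets M T \<Longrightarrow> measure Q A = measure P A"
    using invariant_extension[OF T_meas V_cont V_inv P_in] by blast
  note F = Q_facts[OF Q(1) T_meas]
  interpret Q: prob_space Q by (rule F(1))
  have cs: "(borel_measurable Q :: ('a \<Rightarrow> real) set) = borel_measurable M"
    using measurable_cong_sets[OF F(2) refl, of "borel :: real measure"] by simp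
  have i1: "integrable Q (ls T g)"
    by (rule Q.integrable_const_bound[where B=B])
       (use ls_ereal(2)[where M=M and T=T and g=g and B=B, OF T_meas B] F(3) l1 cs in auto)
  have i2: "integrable Q (ls T (\<lambda>y. - g y))"
    by (rule Q.integrable_const_bound[where B=B])
       (use ls_ereal(2)[where M=M and T=T and g="\<lambda>y. - g y" and B=B, OF T_meas B'] F(3) l2 cs in auto)
  have "integral\<^sup>L Q Pr = integral\<^sup>L Q (ls T g) + integral\<^sup>L Q (ls T (\<lambda>y. - g y))"
    unfolding Pr_def by (rule Bochner_Integration.integral_add[OF i1 i2])
  also have "\<dots> \<le> integral\<^sup>L Q g + integral\<^sup>L Q (\<lambda>y. - g y)"
    by (intro add_mono Q_ls_le[OF Q(1) T_meas gm B] Q_ls_le[OF Q(1) T_meas gm' B'])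
  also have "\<dots> = 0" by simp
  finally have le0: "integral\<^sup>L Q Pr \<le> 0" .
  have iPr: "integrable Q Pr" unfolding Pr_def using i1 i2 by (rule Bochner_Integration.integrable_add)
  have nn: "AE x in Q. 0 \<le> Pr x" using Pr0 F(3) by (intro AE_I2) auto
  have "0 \<le> integral\<^sup>L Q Pr" using nn by (rule integral_nonneg_AE)
  with le0 have "integral\<^sup>L Q Pr = 0" by simp
  then have "AE x in Q. Pr x = 0" using integral_nonneg_eq_0_iff_AE[OF iPr nn] by simp
  then have "AE x in Q. x \<notin> D" by (rule eventually_mono) (simp add: D_def)
  then have "emeasure Q D = 0" using Dm F(2) F(3)
    by (subst (asm) AE_iff_measurable[where N=D]) (auto simp: D_def)
  then have "measure Q D = 0" by (simp add: Q.emeasure_eq_measure)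
  then have "measure P D = 0" using Q(2)[OF Dinv] by simp
  then have "emeasure P D = 0" using Dm setsP by (simp add: P.emeasure_eq_measure)
  then have "AE x in P. x \<notin> D"
    using Dm setsP spP by (subst AE_iff_measurable[where N=D]) (auto simp: D_def)
  moreover have "AE x in P. x \<in> space P" by (rule AE_space)
  ultimately show ?thesis
  proof eventually_elim
    case (elim x)
    then show "- ls T (\<lambda>y. - g y) x = ls T g x" using Pr0 spP unfolding D_def Pr_def
      by (smt (verit) mem_Collect_eq)
  qed
qed

theorem theorem3p4:
  fixes M :: "'a measure" and T :: "'a \<Rightarrow> 'a" and V :: "'a set \<Rightarrow> real"
    and P :: "'a measure" and \<xi> :: "'a \<Rightarrow> real"
  assumes T_meas: "T \<in> measurable M M"
    and V_def: "\<forall>A\<in>sets M. V A = (SUP Q \<in> dominated_probs M V. measure Q A)"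
    and V_cont: "upper_continuous M V"
    and V_inv: "V_invariant M T V"
    and V_erg: "V_ergodic M T V"
    and P_in: "P \<in> dominated_probs M V"
    and \<xi>_meas: "\<xi> \<in> borel_measurable M"
    and \<xi>_bdd: "\<exists>B. \<forall>\<omega>\<in>space M. \<bar>\<xi> \<omega>\<bar> \<le> B"
  shows "AE \<omega> in P.
           convergent (\<lambda>n. (\<Sum>k<n. \<xi> ((T ^^ k) \<omega>)) / real n) \<and>
           - upper_exp0 M T V (\<lambda>x. - \<xi> x) \<le> lim (\<lambda>n. (\<Sum>k<n. \<xi> ((T ^^ k) \<omega>)) / real n) \<and>
           lim (\<lambda>n. (\<Sum>k<n. \<xi> ((T ^^ k) \<omega>)) / real n) \<le> upper_exp0 M T V \<xi>"
proof -
  obtain B where B: "\<And>y. y \<in> space M \<Longrightarrow> \<bar>\<xi> y\<bar> \<le> B" using \<xi>_bdd by blast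
  have B': "\<And>y. y \<in> space M \<Longrightarrow> \<bar>- \<xi> y\<bar> \<le> B" using B by simp
  have nm: "(\<lambda>y. - \<xi> y) \<in> borel_measurable M" using \<xi>_meas by measurable
  have setsP: "sets P = sets M" using P_in by (auto simp: dominated_probs_def)
  have spP: "space P = space M" using setsP by (rule sets_eq_imp_space_eq)
  have a1: "AE x in P. ls T \<xi> x \<le> upper_exp0 M T V \<xi>"
    by (rule upper_bound_ae[OF T_meas V_def V_cont V_inv V_erg P_in \<xi>_meas B])
  have a2: "AE x in P. ls T (\<lambda>y. - \<xi> y) x \<le> upper_exp0 M T V (\<lambda>y. - \<xi> y)"
    by (rule upper_bound_ae[OF T_meas V_def V_cont V_inv V_erg P_in nm B'])
  have a3: "AE x in P. - ls T (\<lambda>y. - \<xi> y) x = ls T \<xi> x"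
    by (rule conv_ae[OF T_meas V_cont V_inv P_in \<xi>_meas B])
  have a4: "AE x in P. x \<in> space P" by (rule AE_space)
  from a1 a2 a3 a4 show ?thesis
  proof eventually_elim
    case (elim x)
    have x: "x \<in> space M" using elim(4) spP by simp
    have eq: "(\<lambda>n. (\<Sum>k<n. \<xi> ((T ^^ k) x)) / real n) = (\<lambda>n. avg T \<xi> n x)"
      by (simp add: avg_def)
    have lim: "(\<lambda>n. avg T \<xi> n x) \<longlonglongrightarrow> ls T \<xi> x"
      by (rule conv_from[where M=M and T=T and g=\<xi> and B=B, OF T_meas B x elim(3)])
    then have "convergent (\<lambda>n. avg T \<xi> n x)" "lim (\<lambda>n. avg T \<xi> n x) = ls T \<xi> x"
      by (auto intro: convergentI limI)
    then show ?case unfolding eq using elim(1,2,3) by linarith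
  qed
qed

end
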